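(* None of the 20 rules of BOOL can be omitted in the Characterization Theorem: for each rule $r$ of BOOL there is a non-failed Boolean CSP that is closed under the applications of all rules of BOOL other than $r$ but is not hyper-arc consistent. For instance, for $r=$ AND4, the CSP $\langle x\wedge y=z;\ x=0,\ y\in\{0,1\},\ z\in\{0,1\}\rangle$ is such a CSP.
   Context: A Boolean CSP is $\langle \mathcal C; x_1\in D_1,\dots,x_n\in D_n\rangle$ with $D_i\subseteq\{0,1\}$ and $\mathcal C$ a finite set of Boolean constraints, each of one of the forms $u=v$ (relation $\{(0,0),(1,1)\}$), $\neg u=v$ ($\{(0,1),(1,0)\}$), $u\wedge v=w$ ($\{(0,0,0),(0,1,0),(1,0,0),(1,1,1)\}$), $u\vee v=w$ ($\{(0,0,0),(0,1,1),(1,0,1),(1,1,1)\}$) on distinct variables; each constraint is understood as restricted to the current domains. We write $x=d$ for $x\in\{d\}$. A CSP is failed if some domain is empty. A constraint is solved if it equals the product of the domains of its variables. $\phi$ is a reformulation of $\psi$ if removing solved constraints from both yields the same CSP. The proof system BOOL consists of the rules (constraint, premise $\rightarrow$ conclusion; $x,y,z$ schematic): EQU1: $x=y$, $x=1\rightarrow y=1$; EQU2: $x=y$, $y=1\rightarrow x=1$; EQU3: $x=y$, $x=0\rightarrow y=0$; EQU4: $x=y$, $y=0\rightarrow x=0$; NOT1: $\neg x=y$, $x=1\rightarrow y=0$; NOT2: $\neg x=y$, $x=0\rightarrow y=1$; NOT3: $\neg x=y$, $y=1\rightarrow x=0$; NOT4: $\neg x=y$, $y=0\rightarrow x=1$;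 AND1: $x\wedge y=z$, $x=1,y=1\rightarrow z=1$; AND2: $x\wedge y=z$, $x=1,z=0\rightarrow y=0$; AND3: $x\wedge y=z$, $y=1,z=0\rightarrow x=0$; AND4: $x\wedge y=z$, $x=0\rightarrow z=0$; AND5: $x\wedge y=z$, $y=0\rightarrow z=0$; AND6: $x\wedge y=z$, $z=1\rightarrow x=1,y=1$; OR1: $x\vee y=z$, $x=1\rightarrow z=1$; OR2: $x\vee y=z$, $x=0,y=0\rightarrow z=0$; OR3: $x\vee y=z$, $x=0,z=1\rightarrow y=1$; OR4: $x\vee y=z$, $y=0,z=1\rightarrow x=1$; OR5: $x\vee y=z$, $y=1\rightarrow z=1$; OR6: $x\vee y=z$, $z=0\rightarrow x=0,y=0$. On CSPs, such a rule with constraint $c$, premise $X=s$, conclusion $Y=t$ acts as: applicable to a CSP containing (an instance of) $c$ in which each variable of $X$ has domain exactly $\{s_i\}$; the result removes $c$ and replaces the domain $D$ of each variable $y_j$ of $Y$ by $D\cap\{t_j\}$. An application is relevant if its result is not a reformulation of the original CSP. A CSP is closed under the applications of a rule $R$ if $R$ cannot be applied to it or no application of it is relevant. A constraint is hyper-arc consistent if for every variable of it each value in its domain participates in a solution to the constraint; a CSP is hyper-arc consistent if every constraint of it is. *)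

theory Defs
  imports Main
begin

text \<open>Boolean values: 0 is False, 1 is True. Variables are natural numbers.\<close>

datatype ctype = CEq | CNot | CAnd | COr

type_synonym constr = "ctype \<times> nat list"

fun arity :: "ctype \<Rightarrow> nat" where
  "arity CEq = 2" | "arity CNot = 2" | "arity CAnd = 3" | "arity COr = 3"

fun crel :: "ctype \<Rightarrow> bool list set" where
  "crel CEq = {[a, b] | a b. a = b}"
| "crel CNot = {[a, b] | a b. b = (\<not> a)}"
| "crel CAnd = {[a, b, c] | a b c. c = (a \<and> b)}"
| "crel COr = {[a, b, c] | a b c. c = (a \<or> b)}"

definition wf_constr :: "constr \<Rightarrow> bool" where
  "wf_constr c \<longleftrightarrow> length (snd c) = arity (fst c) \<and> distinct (snd c)"

record csp =
  vars :: "nat set"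
  cons :: "constr set"
  dom  :: "nat \<Rightarrow> bool set"

definition wf_csp :: "csp \<Rightarrow> bool" where
  "wf_csp P \<longleftrightarrow> finite (vars P) \<and> finite (cons P) \<and>
     (\<forall>c \<in> cons P. wf_constr c \<and> set (snd c) \<subseteq> vars P)"

definition failed :: "csp \<Rightarrow> bool" where
  "failed P \<longleftrightarrow> (\<exists>x \<in> vars P. dom P x = {})"

definition dom_tuples :: "(nat \<Rightarrow> bool set) \<Rightarrow> constr \<Rightarrow> bool list set" where
  "dom_tuples D c = {t. length t = length (snd c) \<and>
      (\<forall>i < length (snd c). t ! i \<in> D (snd c ! i))}"

definition solved :: "(nat \<Rightarrow> bool set) \<Rightarrow> constr \<Rightarrow> bool" where
  "solved D c \<longleftrightarrow> crel (fst c) \<inter> dom_tuples D c = dom_tuples D c"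

definition remove_solved :: "csp \<Rightarrow> csp" where
  "remove_solved P = P\<lparr>cons := {c \<in> cons P. \<not> solved (dom P) c}\<rparr>"

definition reformulation :: "csp \<Rightarrow> csp \<Rightarrow> bool" where
  "reformulation \<phi> \<psi> \<longleftrightarrow> remove_solved \<phi> = remove_solved \<psi>"

datatype rule =
  EQU1 | EQU2 | EQU3 | EQU4
| NOT1 | NOT2 | NOT3 | NOT4
| AND1 | AND2 | AND3 | AND4 | AND5 | AND6
| OR1 | OR2 | OR3 | OR4 | OR5 | OR6

text \<open>Rule specification: constraint kind, premise (position, value) list and
  conclusion (position, value) list; positions 0,1,2 stand for the schematic x,y,z.\<close>
fun rule_spec :: "rule \<Rightarrow> ctype \<times> (nat \<times> bool) list \<times> (nat \<times> bool) list" where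
  "rule_spec EQU1 = (CEq, [(0, True)], [(1, True)])"
| "rule_spec EQU2 = (CEq, [(1, True)], [(0, True)])"
| "rule_spec EQU3 = (CEq, [(0, False)], [(1, False)])"
| "rule_spec EQU4 = (CEq, [(1, False)], [(0, False)])"
| "rule_spec NOT1 = (CNot, [(0, True)], [(1, False)])"
| "rule_spec NOT2 = (CNot, [(0, False)], [(1, True)])"
| "rule_spec NOT3 = (CNot, [(1, True)], [(0, False)])"
| "rule_spec NOT4 = (CNot, [(1, False)], [(0, True)])"
| "rule_spec AND1 = (CAnd, [(0, True), (1, True)], [(2, True)])"
| "rule_spec AND2 = (CAnd, [(0, True), (2, False)], [(1, False)])"
| "rule_spec AND3 = (CAnd, [(1, True), (2, False)], [(0, False)])"
| "rule_spec AND4 = (CAnd, [(0, False)], [(2, False)])"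
| "rule_spec AND5 = (CAnd, [(1, False)], [(2, False)])"
| "rule_spec AND6 = (CAnd, [(2, True)], [(0, True), (1, True)])"
| "rule_spec OR1 = (COr, [(0, True)], [(2, True)])"
| "rule_spec OR2 = (COr, [(0, False), (1, False)], [(2, False)])"
| "rule_spec OR3 = (COr, [(0, False), (2, True)], [(1, True)])"
| "rule_spec OR4 = (COr, [(1, False), (2, True)], [(0, True)])"
| "rule_spec OR5 = (COr, [(1, True)], [(2, True)])"
| "rule_spec OR6 = (COr, [(2, False)], [(0, False), (1, False)])"

definition applicable :: "rule \<Rightarrow> constr \<Rightarrow> csp \<Rightarrow> bool" where
  "applicable r c P \<longleftrightarrow> (case rule_spec r of (k, prem, concl) \<Rightarrow>
      c \<in> cons P \<and> fst c = k \<and>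
      (\<forall>(i, s) \<in> set prem. dom P (snd c ! i) = {s}))"

definition apply_rule :: "rule \<Rightarrow> constr \<Rightarrow> csp \<Rightarrow> csp" where
  "apply_rule r c P = (case rule_spec r of (k, prem, concl) \<Rightarrow>
      P\<lparr>cons := cons P - {c},
        dom := (\<lambda>x. {d \<in> dom P x. \<forall>(j, t) \<in> set concl. snd c ! j = x \<longrightarrow> d = t})\<rparr>)"

definition relevant :: "rule \<Rightarrow> constr \<Rightarrow> csp \<Rightarrow> bool" where
  "relevant r c P \<longleftrightarrow> \<not> reformulation (apply_rule r c P) P"

definition closed_under :: "rule \<Rightarrow> csp \<Rightarrow> bool" where
  "closed_under r P \<longleftrightarrow> (\<forall>c. applicable r c P \<longrightarrow> \<not> relevant r c P)"

definition hyper_arc_consistent :: "csp \<Rightarrow> bool" where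
  "hyper_arc_consistent P \<longleftrightarrow> (\<forall>c \<in> cons P. \<forall>i < length (snd c). \<forall>d \<in> dom P (snd c ! i).
      \<exists>t \<in> crel (fst c) \<inter> dom_tuples (dom P) c. t ! i = d)"

end

theory Submission
  imports Defs
begin
definition PP :: "rule \<Rightarrow> csp" where
  "PP r = (case rule_spec r of (k, prem, concl) \<Rightarrow>
     \<lparr>vars = {0, 1, 2}, cons = {(k, if arity k = 2 then [0,1] else [0,1,2])},
      dom = (\<lambda>v. case map_of prem v of Some s \<Rightarrow> {s} | None \<Rightarrow> {False, True})\<rparr>)"
lemma less3: "(i::nat) < 3 \<longleftrightarrow> i = 0 \<or> i = 1 \<or> i = 2" by auto
lemma less2: "(i::nat) < 2 \<longleftrightarrow> i = 0 \<or> i = 1" by auto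
lemma len3: "length t = 3 \<longleftrightarrow> (\<exists>a b c. t = [a,b,c])"
  by (auto simp: numeral_3_eq_3 length_Suc_conv)
lemma len2: "length t = 2 \<longleftrightarrow> (\<exists>a b. t = [a,b])"
  by (auto simp: numeral_2_eq_2 length_Suc_conv)
lemma dt3: "t \<in> dom_tuples D (k,[a,b,c]) \<longleftrightarrow> (\<exists>x y z. t = [x,y,z] \<and> x \<in> D a \<and> y \<in> D b \<and> z \<in> D c)"
proof
  assume "t \<in> dom_tuples D (k,[a,b,c])"
  then have l: "length t = 3" and h: "\<forall>i<3. t ! i \<in> D ([a,b,c] ! i)" by (auto simp: dom_tuples_def)
  from l obtain x y z where "t = [x,y,z]" by (auto simp: len3)
  with h show "\<exists>x y z. t = [x,y,z] \<and> x \<in> D a \<and> y \<in> D b \<and> z \<in> D c" by (auto simp: less3)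
qed (auto simp: dom_tuples_def less_Suc_eq numeral_3_eq_3)
lemma dt2: "t \<in> dom_tuples D (k,[a,b]) \<longleftrightarrow> (\<exists>x y. t = [x,y] \<and> x \<in> D a \<and> y \<in> D b)"
proof
  assume "t \<in> dom_tuples D (k,[a,b])"
  then have l: "length t = 2" and h: "\<forall>i<2. t ! i \<in> D ([a,b] ! i)" by (auto simp: dom_tuples_def)
  from l obtain x y where "t = [x,y]" by (auto simp: len2)
  with h show "\<exists>x y. t = [x,y] \<and> x \<in> D a \<and> y \<in> D b" by (auto simp: less2)
qed (auto simp: dom_tuples_def less_Suc_eq numeral_2_eq_2)
lemma solved_iff: "solved D c \<longleftrightarrow> (\<forall>t. t \<in> dom_tuples D c \<longrightarrow> t \<in> crel (fst c))"
  by (auto simp: solved_def)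


lemma closed_iff:
  assumes "cons P = {c0}" "\<not> solved (dom P) c0"
  shows "closed_under r P \<longleftrightarrow> \<not> applicable r c0 P"
proof -
  have "relevant r c0 P" if "applicable r c0 P"
  proof -
    have "c0 \<in> cons (remove_solved P)" using assms by (simp add: remove_solved_def)
    moreover have "c0 \<notin> cons (remove_solved (apply_rule r c0 P))"
      by (simp add: remove_solved_def apply_rule_def split: prod.splits)
    ultimately show ?thesis unfolding relevant_def reformulation_def by metis
  qed
  moreover have "applicable r c P \<Longrightarrow> c = c0" for c
    using assms by (simp add: applicable_def split: prod.splits)
  ultimately show ?thesis unfolding closed_under_def by blast
qed

lemma PP_cons: "cons (PP r) = {(fst (rule_spec r), if arity (fst (rule_spec r)) = 2 then [0,1] else [0,1,2])}"
  by (simp add: PP_def split: prod.splits)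

lemma PP_ns: "\<not> solved (dom (PP r)) (fst (rule_spec r), if arity (fst (rule_spec r)) = 2 then [0,1] else [0,1,2])"
  by (cases r) (auto simp: solved_iff dt3 dt2 PP_def all_bool_eq)

lemma PP_props: "wf_csp (PP r) \<and> \<not> failed (PP r) \<and> (\<forall>r'. r' \<noteq> r \<longrightarrow> closed_under r' (PP r))
                \<and> \<not> hyper_arc_consistent (PP r)"
proof (intro conjI allI impI)
  show "wf_csp (PP r)" by (cases r) (auto simp: PP_def wf_csp_def wf_constr_def)
  show "\<not> failed (PP r)" by (cases r) (auto simp: PP_def failed_def)
  show "\<not> hyper_arc_consistent (PP r)"
    by (cases r) (auto simp: PP_def hyper_arc_consistent_def dt3 dt2 less3 less2 all_bool_eq)
  fix r' assume ne: "r' \<noteq> r"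
  have "\<not> applicable r' (fst (rule_spec r), if arity (fst (rule_spec r)) = 2 then [0,1] else [0,1,2]) (PP r)"
    using ne by (cases r; cases r') (auto simp: PP_def applicable_def)
  then show "closed_under r' (PP r)"
    using closed_iff[OF PP_cons PP_ns] by blast
qed

theorem mainTheorem6:
  shows "(\<forall>r. \<exists>P. wf_csp P \<and> \<not> failed P \<and> (\<forall>r'. r' \<noteq> r \<longrightarrow> closed_under r' P)
                \<and> \<not> hyper_arc_consistent P)
    \<and> (let P = \<lparr>vars = {0, 1, 2}, cons = {(CAnd, [0, 1, 2])},
                dom = (\<lambda>v. if v = 0 then {False} else UNIV)\<rparr>
       in wf_csp P \<and> \<not> failed P \<and> (\<forall>r'. r' \<noteq> AND4 \<longrightarrow> closed_under r' P)
          \<and> \<not> hyper_arc_consistent P)"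
proof
  show "\<forall>r. \<exists>P. wf_csp P \<and> \<not> failed P \<and> (\<forall>r'. r' \<noteq> r \<longrightarrow> closed_under r' P)
                \<and> \<not> hyper_arc_consistent P" using PP_props by blast
  have e: "\<lparr>vars = {0, 1, 2}, cons = {(CAnd, [0, 1, 2])},
                dom = (\<lambda>v. if v = 0 then {False} else UNIV)\<rparr> = PP AND4"
    by (auto simp: PP_def UNIV_bool fun_eq_iff)
  show "let P = \<lparr>vars = {0, 1, 2}, cons = {(CAnd, [0, 1, 2])},
                dom = (\<lambda>v. if v = 0 then {False} else UNIV)\<rparr>
       in wf_csp P \<and> \<not> failed P \<and> (\<forall>r'. r' \<noteq> AND4 \<longrightarrow> closed_under r' P)
          \<and> \<not> hyper_arc_consistent P"
    unfolding Let_def e by (rule PP_props)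
qed

end
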